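(* Let $K$ be a nonempty finite set and $X=\Delta(K)$ with the norm $\|\cdot\|_1$. Then $D_0\subset D_1$, and the closure of $D_0$ in $\mathcal C(X)$ (uniform norm) equals $D_1$.
   Context: $X=\Delta(K)=\{p\in\mathbb R_+^K:\sum_k p^k=1\}$, viewed as a subset of $\mathbb R^K$ with $\|p\|_1=\sum_k|p^k|$. $D_1=\{f\in\mathcal C(X):\ \forall x,y\in X,\ \forall a,b\ge0,\ af(x)-bf(y)\le\|ax-by\|_1\}$. $D_0$ is the set of functions $f:X\to\mathbb R$ of the following form. There exist: - nonempty finite sets $I,J$, and - matrices $(G^k)_{k\in K}$ in $[-1,1]^{I\times J}$, such that for all $p\in X$, $f(p)=\mathrm{Val}\big(\sum_kp^kG^k\big)$, where $\mathrm{Val}$ denotes the value of a zero-sum matrix game. *)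

theory Defs
  imports "HOL-Analysis.Analysis"
begin

definition DeltaK :: "(real^'k::finite) set" where
  "DeltaK = {p. (\<forall>k. 0 \<le> p $ k) \<and> (\<Sum>k\<in>UNIV. p $ k) = 1}"

definition norm1 :: "real^'k::finite \<Rightarrow> real" where
  "norm1 x = (\<Sum>k\<in>UNIV. \<bar>x $ k\<bar>)"

definition mixed :: "nat set \<Rightarrow> (nat \<Rightarrow> real) set" where
  "mixed I = {x. (\<forall>i\<in>I. 0 \<le> x i) \<and> (\<Sum>i\<in>I. x i) = 1}"

definition Val :: "nat set \<Rightarrow> nat set \<Rightarrow> (nat \<Rightarrow> nat \<Rightarrow> real) \<Rightarrow> real" where
  "Val I J A = (SUP x\<in>mixed I. INF y\<in>mixed J. \<Sum>i\<in>I. \<Sum>j\<in>J. x i * A i j * y j)"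

definition D1 :: "(real^'k::finite \<Rightarrow> real) set" where
  "D1 = {f. continuous_on DeltaK f \<and>
          (\<forall>x\<in>DeltaK. \<forall>y\<in>DeltaK. \<forall>a b::real. 0 \<le> a \<longrightarrow> 0 \<le> b \<longrightarrow>
              a * f x - b * f y \<le> norm1 (a *\<^sub>R x - b *\<^sub>R y))}"

definition D0 :: "(real^'k::finite \<Rightarrow> real) set" where
  "D0 = {f. \<exists>(I::nat set) (J::nat set) (G::'k \<Rightarrow> nat \<Rightarrow> nat \<Rightarrow> real).
          finite I \<and> I \<noteq> {} \<and> finite J \<and> J \<noteq> {} \<and>
          (\<forall>k. \<forall>i\<in>I. \<forall>j\<in>J. \<bar>G k i j\<bar> \<le> 1) \<and>
          (\<forall>p\<in>DeltaK. f p = Val I J (\<lambda>i j. \<Sum>k\<in>UNIV. p $ k * G k i j))}"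

text \<open>Closure of a set S of functions within C(X), X = DeltaK, for the uniform norm.
  Functions are compared only on X.\<close>
definition unif_closure :: "(real^'k::finite \<Rightarrow> real) set \<Rightarrow> (real^'k \<Rightarrow> real) set" where
  "unif_closure S = {f. continuous_on DeltaK f \<and>
       (\<forall>e>0. \<exists>g\<in>S. \<forall>x\<in>DeltaK. \<bar>f x - g x\<bar> < e)}"

end

theory Submission
  imports Defs
begin


definition PP :: "nat set \<Rightarrow> nat set \<Rightarrow> (nat \<Rightarrow> nat \<Rightarrow> real) \<Rightarrow> (nat \<Rightarrow> real) \<Rightarrow> (nat \<Rightarrow> real) \<Rightarrow> real" where
  "PP I J A x y = (\<Sum>i\<in>I. \<Sum>j\<in>J. x i * A i j * y j)"

lemma Val_PP: "Val I J A = (SUP x\<in>mixed I. INF y\<in>mixed J. PP I J A x y)"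
  by (simp add: Val_def PP_def)

lemma PP_upper:
  assumes "\<forall>i\<in>I. \<forall>j\<in>J. A i j \<le> M" "x \<in> mixed I" "y \<in> mixed J"
  shows "PP I J A x y \<le> M"
proof -
  have "PP I J A x y \<le> (\<Sum>i\<in>I. \<Sum>j\<in>J. x i * M * y j)"
    unfolding PP_def using assms
    by (intro sum_mono mult_right_mono mult_left_mono) (auto simp: mixed_def)
  also have "\<dots> = M * (\<Sum>i\<in>I. x i) * (\<Sum>j\<in>J. y j)"
    by (simp add: sum_distrib_left sum_distrib_right mult_ac)
  also have "\<dots> = M" using assms by (simp add: mixed_def)
  finally show ?thesis .
qed

lemma PP_lower:
  assumes "\<forall>i\<in>I. \<forall>j\<in>J. M \<le> A i j" "x \<in> mixed I" "y \<in> mixed J"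
  shows "M \<le> PP I J A x y"
proof -
  have "M = M * (\<Sum>i\<in>I. x i) * (\<Sum>j\<in>J. y j)" using assms by (simp add: mixed_def)
  also have "\<dots> = (\<Sum>i\<in>I. \<Sum>j\<in>J. x i * M * y j)"
    by (simp add: sum_distrib_left sum_distrib_right mult_ac)
  also have "\<dots> \<le> PP I J A x y"
    unfolding PP_def using assms
    by (intro sum_mono mult_right_mono mult_left_mono) (auto simp: mixed_def)
  finally show ?thesis .
qed

lemma mixed_ne: "finite I \<Longrightarrow> I \<noteq> {} \<Longrightarrow> \<exists>x. x \<in> mixed I"
proof -
  assume "finite I" "I \<noteq> {}"
  then obtain i0 where "i0 \<in> I" by auto
  then have "(\<lambda>i. if i = i0 then 1 else 0) \<in> mixed I"
    using \<open>finite I\<close> by (auto simp: mixed_def)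
  then show ?thesis by blast
qed

lemma bound_ex: "finite I \<Longrightarrow> finite J \<Longrightarrow> \<exists>M. \<forall>i\<in>I. \<forall>j\<in>J. \<bar>A i j\<bar> \<le> (M::real)"
proof -
  assume f: "finite I" "finite J"
  have "\<bar>A i j\<bar> \<le> (\<Sum>i\<in>I. \<Sum>j\<in>J. \<bar>A i j\<bar>)" if "i \<in> I" "j \<in> J" for i j
  proof -
    have "\<bar>A i j\<bar> \<le> (\<Sum>j\<in>J. \<bar>A i j\<bar>)" using f that by (intro member_le_sum) auto
    also have "\<dots> \<le> (\<Sum>i\<in>I. \<Sum>j\<in>J. \<bar>A i j\<bar>)" using f that
      by (intro member_le_sum[where f="\<lambda>i. \<Sum>j\<in>J. \<bar>A i j\<bar>"]) (auto intro: sum_nonneg)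
    finally show ?thesis .
  qed
  then show ?thesis by blast
qed

locale gm =
  fixes I J :: "nat set"
  assumes fI: "finite I" and fJ: "finite J" and neI: "I \<noteq> {}" and neJ: "J \<noteq> {}"
begin

lemma bdd_below_PP: "bdd_below ((\<lambda>y. PP I J A x y) ` mixed J)" if "x \<in> mixed I"
proof -
  obtain M where M: "\<forall>i\<in>I. \<forall>j\<in>J. \<bar>A i j\<bar> \<le> M" using bound_ex[OF fI fJ] by blast
  have M2: "\<forall>i\<in>I. \<forall>j\<in>J. -M \<le> A i j"
  proof (intro ballI)
    fix i j assume "i \<in> I" "j \<in> J"
    then have "\<bar>A i j\<bar> \<le> M" using M by blast
    then show "-M \<le> A i j" by linarith
  qed
  have H: "-M \<le> PP I J A x y" if "y \<in> mixed J" for y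
    by (rule PP_lower[OF M2 \<open>x \<in> mixed I\<close> that])
  show ?thesis by (rule bdd_belowI2[OF H])
qed

lemma bdd_above_INF: "bdd_above ((\<lambda>x. INF y\<in>mixed J. PP I J A x y) ` mixed I)"
proof -
  obtain M where M: "\<forall>i\<in>I. \<forall>j\<in>J. \<bar>A i j\<bar> \<le> M" using bound_ex[OF fI fJ] by blast
  obtain y0 where y0: "y0 \<in> mixed J" using mixed_ne[OF fJ neJ] by blast
  have H: "(INF y\<in>mixed J. PP I J A x y) \<le> M" if "x \<in> mixed I" for x
  proof -
    have "(INF y\<in>mixed J. PP I J A x y) \<le> PP I J A x y0"
      by (rule cINF_lower[OF bdd_below_PP[OF that] y0])
    also have "\<dots> \<le> M" by (rule PP_upper) (use M that y0 in \<open>auto simp: abs_le_iff\<close>)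
    finally show ?thesis .
  qed
  show ?thesis by (rule bdd_aboveI2[OF H])
qed

lemma Val_lower:
  assumes "i0 \<in> I" "\<forall>j\<in>J. L \<le> A i0 j"
  shows "L \<le> Val I J A"
proof -
  define x0 where "x0 = (\<lambda>i. if i = i0 then 1 else (0::real))"
  have x0: "x0 \<in> mixed I" using assms fI by (auto simp: mixed_def x0_def)
  have "L \<le> (INF y\<in>mixed J. PP I J A x0 y)"
  proof (rule cINF_greatest)
    show "mixed J \<noteq> {}" using mixed_ne[OF fJ neJ] by blast
    fix y assume y: "y \<in> mixed J"
    have "PP I J A x0 y = (\<Sum>j\<in>J. A i0 j * y j)"
    proof -
      have "PP I J A x0 y = (\<Sum>i\<in>I. if i = i0 then (\<Sum>j\<in>J. A i0 j * y j) else 0)"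
        unfolding PP_def by (intro sum.cong) (auto simp: x0_def)
      then show ?thesis using assms fI by simp
    qed
    also have "\<dots> \<ge> (\<Sum>j\<in>J. L * y j)"
      using assms y by (intro sum_mono mult_right_mono) (auto simp: mixed_def)
    finally show "L \<le> PP I J A x0 y" using y by (simp add: mixed_def sum_distrib_left[symmetric])
  qed
  also have "\<dots> \<le> Val I J A" unfolding Val_PP
    by (rule cSUP_upper[OF x0 bdd_above_INF])
  finally show ?thesis .
qed

lemma Val_upper:
  assumes "j0 \<in> J" "\<forall>i\<in>I. A i j0 \<le> U"
  shows "Val I J A \<le> U"
  unfolding Val_PP
proof (rule cSUP_least)
  show "mixed I \<noteq> {}" using mixed_ne[OF fI neI] by blast
  fix x assume x: "x \<in> mixed I"
  define y0 where "y0 = (\<lambda>j. if j = j0 then 1 else (0::real))"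
  have y0: "y0 \<in> mixed J" using assms fJ by (auto simp: mixed_def y0_def)
  have "(INF y\<in>mixed J. PP I J A x y) \<le> PP I J A x y0"
    by (rule cINF_lower[OF bdd_below_PP[OF x] y0])
  also have "PP I J A x y0 = (\<Sum>i\<in>I. x i * A i j0)"
    unfolding PP_def y0_def using assms fJ by (simp add: if_distrib cong: if_cong)
  also have "\<dots> \<le> (\<Sum>i\<in>I. x i * U)"
    using assms x by (intro sum_mono mult_left_mono) (auto simp: mixed_def)
  also have "\<dots> = U" using x by (simp add: mixed_def sum_distrib_right[symmetric])
  finally show "(INF y\<in>mixed J. PP I J A x y) \<le> U" .
qed

lemma Val_compare:
  assumes "\<forall>x\<in>mixed I. \<forall>y\<in>mixed J. PP I J A x y \<le> PP I J B x y + c"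
  shows "Val I J A \<le> Val I J B + c"
  unfolding Val_PP
proof (rule cSUP_least)
  show "mixed I \<noteq> {}" using mixed_ne[OF fI neI] by blast
  fix x assume x: "x \<in> mixed I"
  have "(INF y\<in>mixed J. PP I J A x y) - c \<le> (INF y\<in>mixed J. PP I J B x y)"
  proof (rule cINF_greatest)
    show "mixed J \<noteq> {}" using mixed_ne[OF fJ neJ] by blast
    fix y assume y: "y \<in> mixed J"
    have "(INF y\<in>mixed J. PP I J A x y) \<le> PP I J A x y"
      by (rule cINF_lower[OF bdd_below_PP[OF x] y])
    then show "(INF y\<in>mixed J. PP I J A x y) - c \<le> PP I J B x y" using assms x y by fastforce
  qed
  also have "\<dots> \<le> (SUP x\<in>mixed I. INF y\<in>mixed J. PP I J B x y)"
    by (rule cSUP_upper[OF x bdd_above_INF])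
  finally show "(INF y\<in>mixed J. PP I J A x y) \<le> (SUP x\<in>mixed I. INF y\<in>mixed J. PP I J B x y) + c"
    by simp
qed

lemma PP_scale: "PP I J (\<lambda>i j. a * A i j) x y = a * PP I J A x y"
  unfolding PP_def by (simp add: sum_distrib_left mult_ac)

lemma Val_scale:
  assumes "0 \<le> (a::real)"
  shows "Val I J (\<lambda>i j. a * A i j) = a * Val I J A"
proof (cases "a = 0")
  case True
  have "Val I J (\<lambda>i j. 0) = 0"
  proof -
    have "mixed I \<noteq> {}" "mixed J \<noteq> {}" using mixed_ne[OF fI neI] mixed_ne[OF fJ neJ] by auto
    then show ?thesis by (simp add: Val_PP PP_def)
  qed
  then show ?thesis using True by simp
next
  case False
  then have a: "a > 0" using assms by simp
  have le1: "Val I J (\<lambda>i j. b * B i j) \<le> b * Val I J B" if b: "b > 0" for b :: real and B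
    unfolding Val_PP
  proof (rule cSUP_least)
    show "mixed I \<noteq> {}" using mixed_ne[OF fI neI] by blast
    fix x assume x: "x \<in> mixed I"
    have "(INF y\<in>mixed J. PP I J (\<lambda>i j. b * B i j) x y) / b \<le> (INF y\<in>mixed J. PP I J B x y)"
    proof (rule cINF_greatest)
      show "mixed J \<noteq> {}" using mixed_ne[OF fJ neJ] by blast
      fix y assume y: "y \<in> mixed J"
      have "(INF y\<in>mixed J. PP I J (\<lambda>i j. b * B i j) x y) \<le> PP I J (\<lambda>i j. b * B i j) x y"
        by (rule cINF_lower[OF bdd_below_PP[OF x] y])
      then show "(INF y\<in>mixed J. PP I J (\<lambda>i j. b * B i j) x y) / b \<le> PP I J B x y"
        using b by (simp add: PP_scale divide_simps mult.commute)
    qed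
    also have "\<dots> \<le> (SUP x\<in>mixed I. INF y\<in>mixed J. PP I J B x y)"
      by (rule cSUP_upper[OF x bdd_above_INF])
    finally show "(INF y\<in>mixed J. PP I J (\<lambda>i j. b * B i j) x y) \<le> b * (SUP x\<in>mixed I. INF y\<in>mixed J. PP I J B x y)"
      using b by (simp add: divide_simps mult.commute)
  qed
  have "Val I J (\<lambda>i j. a * A i j) \<le> a * Val I J A" by (rule le1[OF a])
  moreover have "Val I J (\<lambda>i j. (1/a) * (a * A i j)) \<le> (1/a) * Val I J (\<lambda>i j. a * A i j)"
    by (rule le1) (use a in simp)
  then have "a * Val I J A \<le> Val I J (\<lambda>i j. a * A i j)"
    using a by (simp add: divide_simps mult.commute)
  ultimately show ?thesis by simp
qed

end


lemma PP_diff: "PP I J A x y - PP I J B x y = PP I J (\<lambda>i j. A i j - B i j) x y"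
  unfolding PP_def by (simp add: sum_subtractf[symmetric] algebra_simps)

lemma norm1_le: "norm1 (z::real^'k::finite) \<le> real CARD('k) * norm z"
proof -
  have "norm1 z \<le> (\<Sum>k\<in>(UNIV::'k set). norm z)"
    unfolding norm1_def by (intro sum_mono) (rule component_le_norm_cart)
  then show ?thesis by simp
qed

lemma norm1_sym: "norm1 (x - y) = norm1 (y - (x::real^'k::finite))"
  unfolding norm1_def by (simp add: abs_minus_commute)

lemma dot_lip:
  assumes "\<forall>k. \<bar>c k\<bar> \<le> (1::real)"
  shows "(\<Sum>k\<in>UNIV. c k * p$k) - (\<Sum>k\<in>UNIV. c k * q$k) \<le> norm1 (p - (q::real^'k::finite))"
proof -
  have "(\<Sum>k\<in>UNIV. c k * p$k) - (\<Sum>k\<in>UNIV. c k * q$k) = (\<Sum>k\<in>UNIV. c k * (p$k - q$k))"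
    by (simp add: sum_subtractf[symmetric] algebra_simps)
  also have "\<dots> \<le> (\<Sum>k\<in>UNIV. \<bar>p$k - q$k\<bar>)"
  proof (intro sum_mono)
    fix k
    have "c k * (p$k - q$k) \<le> \<bar>c k\<bar> * \<bar>p$k - q$k\<bar>" by (metis abs_ge_self abs_mult)
    also have "\<dots> \<le> 1 * \<bar>p$k - q$k\<bar>" using assms by (intro mult_right_mono) auto
    finally show "c k * (p$k - q$k) \<le> \<bar>p$k - q$k\<bar>" by simp
  qed
  finally show ?thesis by (simp add: norm1_def)
qed

lemma lip_cont:
  assumes "\<forall>x\<in>DeltaK. \<forall>y\<in>DeltaK. f x - f y \<le> norm1 (x - (y::real^'k::finite))"
  shows "continuous_on DeltaK f"
proof (rule lipschitz_on_continuous_on)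
  show "(real CARD('k))-lipschitz_on DeltaK f"
  proof (rule lipschitz_onI)
    fix x y :: "real^'k" assume xy: "x \<in> DeltaK" "y \<in> DeltaK"
    have "f x - f y \<le> norm1 (x - y)" using assms xy by blast
    moreover have "f y - f x \<le> norm1 (y - x)" using assms xy by blast
    ultimately have "f x - f y \<le> norm1 (x - y)" "f y - f x \<le> norm1 (x - y)"
      using norm1_sym[of x y] by auto
    then have "\<bar>f x - f y\<bar> \<le> norm1 (x - y)" by linarith
    also have "\<dots> \<le> real CARD('k) * norm (x - y)" by (rule norm1_le)
    finally show "dist (f x) (f y) \<le> real CARD('k) * dist x y" by (simp add: dist_norm dist_real_def)
  qed simp
qed

lemma D1_lip: "f \<in> D1 \<Longrightarrow> x \<in> DeltaK \<Longrightarrow> y \<in> DeltaK \<Longrightarrow> f x - f y \<le> norm1 (x - y)"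
proof -
  assume "f \<in> D1" "x \<in> DeltaK" "y \<in> DeltaK"
  then have H: "\<forall>x\<in>DeltaK. \<forall>y\<in>DeltaK. \<forall>a b. 0 \<le> a \<longrightarrow> 0 \<le> b \<longrightarrow> a * f x - b * f y \<le> norm1 (a *\<^sub>R x - b *\<^sub>R y)"
    unfolding D1_def by simp
  have "1 * f x - 1 * f y \<le> norm1 (1 *\<^sub>R x - 1 *\<^sub>R y)"
    by (rule H[rule_format]) (use \<open>x \<in> DeltaK\<close> \<open>y \<in> DeltaK\<close> in auto)
  then show ?thesis by simp
qed

lemma D0_sub_D1: "(D0 :: (real^'k::finite \<Rightarrow> real) set) \<subseteq> D1"
proof
  fix f :: "real^'k \<Rightarrow> real" assume "f \<in> D0"
  then obtain I J G where fin: "finite I" "I \<noteq> {}" "finite J" "J \<noteq> {}"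
    and G: "\<forall>k. \<forall>i\<in>I. \<forall>j\<in>J. \<bar>G k i j\<bar> \<le> 1"
    and f: "\<forall>p\<in>DeltaK. f p = Val I J (\<lambda>i j. \<Sum>k\<in>UNIV. p $ k * G k i j)"
    unfolding D0_def by blast
  interpret gm I J using fin by unfold_locales
  define M where "M p = (\<lambda>i j. \<Sum>k\<in>UNIV. p $ k * G k i j)" for p :: "real^'k"
  have ineq: "a * f x - b * f y \<le> norm1 (a *\<^sub>R x - b *\<^sub>R y)"
    if xy: "x \<in> DeltaK" "y \<in> DeltaK" and ab: "0 \<le> a" "0 \<le> b" for x y a b
  proof -
    have ent: "a * M x i j - b * M y i j \<le> norm1 (a *\<^sub>R x - b *\<^sub>R y)" if "i \<in> I" "j \<in> J" for i j
    proof -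
      have "a * M x i j - b * M y i j = (\<Sum>k\<in>UNIV. G k i j * (a *\<^sub>R x - b *\<^sub>R y)$k) - (\<Sum>k\<in>UNIV. G k i j * (0::real^'k)$k)"
        unfolding M_def by (simp add: sum_distrib_left sum_subtractf[symmetric] algebra_simps)
      also have "\<dots> \<le> norm1 ((a *\<^sub>R x - b *\<^sub>R y) - 0)"
        by (rule dot_lip) (use G that in auto)
      finally show ?thesis by simp
    qed
    have "a * f x = Val I J (\<lambda>i j. a * M x i j)" using Val_scale[OF ab(1)] f xy by (simp add: M_def)
    also have "\<dots> \<le> Val I J (\<lambda>i j. b * M y i j) + norm1 (a *\<^sub>R x - b *\<^sub>R y)"
    proof (rule Val_compare, intro ballI)
      fix x' y' assume "x' \<in> mixed I" "y' \<in> mixed J"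
      then have "PP I J (\<lambda>i j. a * M x i j - b * M y i j) x' y' \<le> norm1 (a *\<^sub>R x - b *\<^sub>R y)"
        by (intro PP_upper) (use ent in auto)
      then show "PP I J (\<lambda>i j. a * M x i j) x' y' \<le> PP I J (\<lambda>i j. b * M y i j) x' y' + norm1 (a *\<^sub>R x - b *\<^sub>R y)"
        using PP_diff[of I J "\<lambda>i j. a * M x i j" x' y' "\<lambda>i j. b * M y i j"] by linarith
    qed
    also have "Val I J (\<lambda>i j. b * M y i j) = b * f y" using Val_scale[OF ab(2)] f xy by (simp add: M_def)
    finally show ?thesis by simp
  qed
  have "continuous_on DeltaK f"
    by (rule lip_cont) (use ineq[where a=1 and b=1] in simp)
  then show "f \<in> D1" unfolding D1_def using ineq by blast
qed



lemma norm1_Delta: "p \<in> DeltaK \<Longrightarrow> norm1 p = 1"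
  unfolding DeltaK_def norm1_def by simp

lemma compact_Delta: "compact (DeltaK :: (real^'k::finite) set)"
  unfolding compact_eq_bounded_closed
proof
  have "norm p \<le> 1" if "p \<in> (DeltaK :: (real^'k) set)" for p
    using norm_le_l1_cart[of p] norm1_Delta[OF that] by (simp add: norm1_def)
  then show "bounded (DeltaK :: (real^'k) set)" unfolding bounded_iff by blast
  have eq: "(DeltaK :: (real^'k) set) = (\<Inter>k. {p. 0 \<le> p$k}) \<inter> {p. (\<Sum>k\<in>UNIV. p$k) = 1}"
    unfolding DeltaK_def by auto
  show "closed (DeltaK :: (real^'k) set)" unfolding eq
    by (intro closed_Int closed_INT ballI closed_Collect_le closed_Collect_eq continuous_intros)
qed

lemma Delta_ne: "\<exists>p. p \<in> (DeltaK :: (real^'k::finite) set)"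
proof -
  have "(\<chi> k. 1 / real CARD('k)) \<in> (DeltaK :: (real^'k) set)"
    unfolding DeltaK_def by simp
  then show ?thesis by blast
qed

lemma closure_sub_D1: "unif_closure (D0 :: (real^'k::finite \<Rightarrow> real) set) \<subseteq> D1"
proof
  fix f :: "real^'k \<Rightarrow> real" assume "f \<in> unif_closure D0"
  then have cont: "continuous_on DeltaK f" and app: "\<forall>e>0. \<exists>g\<in>D0. \<forall>x\<in>DeltaK. \<bar>f x - g x\<bar> < e"
    unfolding unif_closure_def by auto
  have "a * f x - b * f y \<le> norm1 (a *\<^sub>R x - b *\<^sub>R y)"
    if xy: "x \<in> DeltaK" "y \<in> DeltaK" and ab: "0 \<le> a" "0 \<le> b" for x y a b
  proof (rule field_le_epsilon)
    fix e :: real assume e: "e > 0"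
    define e' where "e' = e / (a + b + 1)"
    have e': "e' > 0" using e ab by (simp add: e'_def)
    obtain g where g: "g \<in> D0" and gf: "\<forall>x\<in>DeltaK. \<bar>f x - g x\<bar> < e'" using app e' by blast
    have gD1: "g \<in> D1" using g D0_sub_D1 by blast
    have H: "\<forall>x\<in>DeltaK. \<forall>y\<in>DeltaK. \<forall>a b. 0 \<le> a \<longrightarrow> 0 \<le> b \<longrightarrow> a * g x - b * g y \<le> norm1 (a *\<^sub>R x - b *\<^sub>R y)"
      using gD1 unfolding D1_def by simp
    have g1: "a * g x - b * g y \<le> norm1 (a *\<^sub>R x - b *\<^sub>R y)"
      by (rule H[rule_format]) (use xy ab in auto)
    have "\<bar>f x - g x\<bar> \<le> e'" "\<bar>f y - g y\<bar> \<le> e'" using gf xy by (auto simp: less_imp_le)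
    then have "a * \<bar>f x - g x\<bar> \<le> a * e'" "b * \<bar>f y - g y\<bar> \<le> b * e'"
      using ab by (auto intro: mult_left_mono)
    moreover have "a * (f x - g x) \<le> a * \<bar>f x - g x\<bar>" "b * (g y - f y) \<le> b * \<bar>f y - g y\<bar>"
      using ab by (auto intro!: mult_left_mono)
    ultimately have "a * (f x - g x) \<le> a * e'" "b * (g y - f y) \<le> b * e'"
      by linarith+
    moreover have "(a + b) * e' \<le> e" unfolding e'_def using e ab by (simp add: field_simps)
    ultimately show "a * f x - b * f y \<le> norm1 (a *\<^sub>R x - b *\<^sub>R y) + e"
      using g1 by (simp add: algebra_simps)
  qed
  then show "f \<in> D1" unfolding D1_def using cont by blast
qed



lemma D1_H: "f \<in> D1 \<Longrightarrow> \<forall>x\<in>DeltaK. \<forall>y\<in>DeltaK. \<forall>a b. 0 \<le> a \<longrightarrow> 0 \<le> b \<longrightarrow> a * f x - b * f y \<le> norm1 (a *\<^sub>R x - b *\<^sub>R y)"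
  unfolding D1_def by simp

lemma D1_bounds:
  assumes "f \<in> D1" "u \<in> DeltaK"
  shows "f u \<le> 1" "- f u \<le> 1"
proof -
  have "1 * f u - 0 * f u \<le> norm1 (1 *\<^sub>R u - 0 *\<^sub>R u)"
    by (rule D1_H[OF assms(1), rule_format]) (use assms in auto)
  then show "f u \<le> 1" using norm1_Delta[OF assms(2)] by simp
  have "0 * f u - 1 * f u \<le> norm1 (0 *\<^sub>R u - 1 *\<^sub>R u)"
    by (rule D1_H[OF assms(1), rule_format]) (use assms in auto)
  moreover have "norm1 (- u) = norm1 u" by (simp add: norm1_def)
  ultimately show "- f u \<le> 1" using norm1_Delta[OF assms(2)] by simp
qed

lemma norm1_pos_comb:
  assumes "u \<in> DeltaK" "w \<in> DeltaK" "0 \<le> a" "0 \<le> b"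
  shows "norm1 (a *\<^sub>R u + b *\<^sub>R w) = a + b"
proof -
  have "norm1 (a *\<^sub>R u + b *\<^sub>R w) = (\<Sum>k\<in>UNIV. a * u$k + b * w$k)"
    unfolding norm1_def using assms by (intro sum.cong) (auto simp: DeltaK_def)
  also have "\<dots> = a + b" using assms by (simp add: sum.distrib sum_distrib_left[symmetric] DeltaK_def)
  finally show ?thesis .
qed

lemma D1_key:
  assumes f: "f \<in> D1" and uw: "u \<in> DeltaK" "w \<in> DeltaK"
  shows "\<alpha> * f u + \<beta> * f w \<le> norm1 (\<alpha> *\<^sub>R u + \<beta> *\<^sub>R w)"
proof -
  note H = D1_H[OF f, rule_format]
  note bu = D1_bounds[OF f uw(1)] and bw = D1_bounds[OF f uw(2)]
  consider "0 \<le> \<alpha>" "0 \<le> \<beta>" | "\<alpha> \<le> 0" "\<beta> \<le> 0" | "0 \<le> \<alpha>" "\<beta> \<le> 0" | "\<alpha> \<le> 0" "0 \<le> \<beta>"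
    by linarith
  then show ?thesis
  proof cases
    case 1
    have "\<alpha> * f u \<le> \<alpha>" "\<beta> * f w \<le> \<beta>" using 1 bu bw
      by (auto intro: mult_left_le)
    then show ?thesis using norm1_pos_comb[OF uw 1] by linarith
  next
    case 2
    have "norm1 (\<alpha> *\<^sub>R u + \<beta> *\<^sub>R w) = norm1 ((-\<alpha>) *\<^sub>R u + (-\<beta>) *\<^sub>R w)"
      unfolding norm1_def by (intro sum.cong) auto
    also have "\<dots> = -\<alpha> - \<beta>" using norm1_pos_comb[OF uw, of "-\<alpha>" "-\<beta>"] 2 by simp
    finally have n: "norm1 (\<alpha> *\<^sub>R u + \<beta> *\<^sub>R w) = -\<alpha> - \<beta>" .
    have "(-\<alpha>) * (- f u) \<le> -\<alpha>" "(-\<beta>) * (- f w) \<le> -\<beta>"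
      using mult_left_le[of "-f u" "-\<alpha>"] mult_left_le[of "-f w" "-\<beta>"] 2 bu bw by auto
    then show ?thesis using n by simp
  next
    case 3
    have "\<alpha> * f u - (-\<beta>) * f w \<le> norm1 (\<alpha> *\<^sub>R u - (-\<beta>) *\<^sub>R w)"
      by (rule H) (use uw 3 in auto)
    then show ?thesis by simp
  next
    case 4
    have "\<beta> * f w - (-\<alpha>) * f u \<le> norm1 (\<beta> *\<^sub>R w - (-\<alpha>) *\<^sub>R u)"
      by (rule H) (use uw 4 in auto)
    then show ?thesis by (simp add: add.commute)
  qed
qed

lemma interp:
  assumes f: "f \<in> D1" and uw: "u \<in> DeltaK" "w \<in> (DeltaK :: (real^'k::finite) set)"
  shows "\<exists>c::real^'k. (\<forall>k. \<bar>c$k\<bar> \<le> 1) \<and> (\<Sum>k\<in>UNIV. c$k * u$k) = f u \<and> (\<Sum>k\<in>UNIV. c$k * w$k) = f w"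
proof (rule ccontr)
  assume nex: "\<not> ?thesis"
  define L where "L c = (\<Sum>k\<in>UNIV. c$k * u$k, \<Sum>k\<in>UNIV. c$k * w$k)" for c :: "real^'k"
  define Q where "Q = cbox (-1) (1::real^'k)"
  have Qm: "c \<in> Q \<longleftrightarrow> (\<forall>k. \<bar>c$k\<bar> \<le> 1)" for c unfolding Q_def mem_box_cart by (auto simp: abs_le_iff)
  have lin: "linear L" unfolding L_def
    by (intro linearI) (auto simp: sum.distrib sum_distrib_left algebra_simps)
  have "(f u, f w) \<notin> L ` Q" using nex Qm by (auto simp: L_def)
  moreover have "convex (L ` Q)" by (rule convex_linear_image[OF lin]) (simp add: Q_def convex_box)
  moreover have "closed (L ` Q)"
    by (rule compact_imp_closed, rule compact_continuous_image)
       (use lin linear_conv_bounded_linear[of L] in \<open>auto simp: Q_def intro: linear_continuous_on\<close>)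
  ultimately obtain a b where ab: "inner a (f u, f w) < b" "\<forall>x\<in>L ` Q. inner a x > b"
    using separating_hyperplane_closed_point by blast
  obtain a1 a2 where a: "a = (a1, a2)" by (cases a)
  define d where "d = a1 *\<^sub>R u + a2 *\<^sub>R w"
  define c where "c = (\<chi> k. - sgn (d$k))"
  have cQ: "c \<in> Q" unfolding Qm c_def by (auto simp: sgn_if)
  have "inner a (L c) = (\<Sum>k\<in>UNIV. c$k * d$k)"
    unfolding a L_def d_def by (simp add: sum_distrib_left sum.distrib algebra_simps)
  also have "\<dots> = - norm1 d"
    unfolding norm1_def c_def by (simp add: sum_negf[symmetric] mult.commute[of "sgn _"] abs_sgn[symmetric])
  finally have "b < - norm1 d" using ab(2) cQ by force
  then have "a1 * f u + a2 * f w < - norm1 d" using ab(1) a by simp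
  moreover have "(-a1) * f u + (-a2) * f w \<le> norm1 ((-a1) *\<^sub>R u + (-a2) *\<^sub>R w)"
    by (rule D1_key[OF f uw])
  moreover have "norm1 ((-a1) *\<^sub>R u + (-a2) *\<^sub>R w) = norm1 d"
    unfolding norm1_def d_def by (intro sum.cong) auto
  ultimately show False by simp
qed



lemma net:
  assumes "e > 0"
  shows "\<exists>T. finite T \<and> T \<subseteq> (DeltaK :: (real^'k::finite) set) \<and> (\<forall>p\<in>DeltaK. \<exists>t\<in>T. norm1 (p - t) < e)"
proof -
  define r where "r = e / real CARD('k)"
  have r: "r > 0" using assms by (simp add: r_def)
  obtain T where T: "T \<subseteq> (DeltaK :: (real^'k) set)" "finite T" "DeltaK \<subseteq> (\<Union>t\<in>T. ball t r)"
    by (rule compactE_image[OF compact_Delta, of DeltaK "\<lambda>t. ball t r"]) (use r in auto)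
  have "\<exists>t\<in>T. norm1 (p - t) < e" if p: "p \<in> DeltaK" for p
  proof -
    obtain t where t: "t \<in> T" "dist t p < r" using T(3) p by auto
    have "norm1 (p - t) \<le> real CARD('k) * norm (p - t)" by (rule norm1_le)
    also have "norm (p - t) < r" using t by (simp add: dist_norm norm_minus_commute)
    then have "real CARD('k) * norm (p - t) < real CARD('k) * r" by simp
    also have "\<dots> = e" by (simp add: r_def)
    finally show ?thesis using t by blast
  qed
  then show ?thesis using T by blast
qed

lemma D1_sub_closure: "(D1 :: (real^'k::finite \<Rightarrow> real) set) \<subseteq> unif_closure D0"
proof
  fix f :: "real^'k \<Rightarrow> real" assume f: "f \<in> D1"
  have cont: "continuous_on DeltaK f" using f by (simp add: D1_def)
  have "\<exists>g\<in>D0. \<forall>x\<in>DeltaK. \<bar>f x - g x\<bar> < e" if e: "e > 0" for e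
  proof -
    obtain T where T: "finite T" "T \<subseteq> (DeltaK :: (real^'k) set)" and cov: "\<forall>p\<in>DeltaK. \<exists>t\<in>T. norm1 (p - t) < e/2"
      using net[of "e/2"] e by auto
    obtain ts where ts: "set ts = T" using finite_list[OF T(1)] by blast
    define n where "n = length ts"
    obtain p0 where p0: "p0 \<in> (DeltaK :: (real^'k) set)" using Delta_ne by blast
    have "T \<noteq> {}" using cov p0 by blast
    then have n: "n > 0" using ts by (auto simp: n_def)
    have tsD: "ts ! i \<in> DeltaK" if "i < n" for i using that ts T(2) by (auto simp: n_def)
    have "\<forall>i j. \<exists>c::real^'k. i < n \<longrightarrow> j < n \<longrightarrow> (\<forall>k. \<bar>c$k\<bar> \<le> 1) \<and>
        (\<Sum>k\<in>UNIV. c$k * (ts!i)$k) = f (ts!i) \<and> (\<Sum>k\<in>UNIV. c$k * (ts!j)$k) = f (ts!j)"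
      using interp[OF f tsD tsD] by blast
    then obtain C where C: "\<And>i j. i < n \<Longrightarrow> j < n \<Longrightarrow> (\<forall>k. \<bar>C i j$k\<bar> \<le> 1) \<and>
        (\<Sum>k\<in>UNIV. C i j$k * (ts!i)$k) = f (ts!i) \<and> (\<Sum>k\<in>UNIV. C i j$k * (ts!j)$k) = f (ts!j)"
      by metis
    define G where "G k i j = C i j $ k" for k i j
    define g where "g p = Val {..<n} {..<n} (\<lambda>i j. \<Sum>k\<in>UNIV. p $ k * G k i j)" for p :: "real^'k"
    interpret gm "{..<n}" "{..<n}" using n by unfold_locales auto
    have gD0: "g \<in> D0" unfolding D0_def
      by (rule CollectI, rule exI[of _ "{..<n}"], rule exI[of _ "{..<n}"], rule exI[of _ G])
         (use n C in \<open>auto simp: G_def g_def\<close>)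
    have "\<bar>f p - g p\<bar> < e" if p: "p \<in> DeltaK" for p
    proof -
      obtain t where t: "t \<in> T" "norm1 (p - t) < e/2" using cov p by blast
      obtain m where m: "m < n" "ts ! m = t" using t ts by (auto simp: n_def in_set_conv_nth)
      have tD: "t \<in> DeltaK" using t T by auto
      have sym: "norm1 (t - p) = norm1 (p - t)" by (rule norm1_sym)
      have lo: "f p - 2 * norm1 (p - t) \<le> g p" unfolding g_def
      proof (rule Val_lower[of m])
        show "m \<in> {..<n}" using m by simp
        show "\<forall>j\<in>{..<n}. f p - 2 * norm1 (p - t) \<le> (\<Sum>k\<in>UNIV. p $ k * G k m j)"
        proof
          fix j assume j: "j \<in> {..<n}"
          have Cm: "\<forall>k. \<bar>C m j$k\<bar> \<le> 1" "(\<Sum>k\<in>UNIV. C m j$k * t$k) = f t" using C[of m j] m j by auto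
          have "(\<Sum>k\<in>UNIV. C m j$k * t$k) - (\<Sum>k\<in>UNIV. C m j$k * p$k) \<le> norm1 (t - p)"
            by (rule dot_lip) (use Cm in auto)
          moreover have "f p - f t \<le> norm1 (p - t)" by (rule D1_lip[OF f p tD])
          moreover have "(\<Sum>k\<in>UNIV. p $ k * G k m j) = (\<Sum>k\<in>UNIV. C m j$k * p$k)"
            by (simp add: G_def mult.commute)
          ultimately show "f p - 2 * norm1 (p - t) \<le> (\<Sum>k\<in>UNIV. p $ k * G k m j)"
            using Cm sym by linarith
        qed
      qed
      have up: "g p \<le> f p + 2 * norm1 (p - t)" unfolding g_def
      proof (rule Val_upper[of m])
        show "m \<in> {..<n}" using m by simp
        show "\<forall>i\<in>{..<n}. (\<Sum>k\<in>UNIV. p $ k * G k i m) \<le> f p + 2 * norm1 (p - t)"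
        proof
          fix i assume i: "i \<in> {..<n}"
          have Cm: "\<forall>k. \<bar>C i m$k\<bar> \<le> 1" "(\<Sum>k\<in>UNIV. C i m$k * t$k) = f t" using C[of i m] m i by auto
          have "(\<Sum>k\<in>UNIV. C i m$k * p$k) - (\<Sum>k\<in>UNIV. C i m$k * t$k) \<le> norm1 (p - t)"
            by (rule dot_lip) (use Cm in auto)
          moreover have "f t - f p \<le> norm1 (t - p)" by (rule D1_lip[OF f tD p])
          moreover have "(\<Sum>k\<in>UNIV. p $ k * G k i m) = (\<Sum>k\<in>UNIV. C i m$k * p$k)"
            by (simp add: G_def mult.commute)
          ultimately show "(\<Sum>k\<in>UNIV. p $ k * G k i m) \<le> f p + 2 * norm1 (p - t)"
            using Cm sym by linarith
        qed
      qed
      show ?thesis using lo up t(2) by linarith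
    qed
    then show ?thesis using gD0 by blast
  qed
  then show "f \<in> unif_closure D0" unfolding unif_closure_def using cont by blast
qed

theorem lemma3:
  shows "(D0 :: (real^'k::finite \<Rightarrow> real) set) \<subseteq> D1 \<and> unif_closure (D0 :: (real^'k \<Rightarrow> real) set) = D1"
  using D0_sub_D1 closure_sub_D1 D1_sub_closure by blast

end
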